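(* (i) $\mathcal{SC}_\alpha\subset\mathcal{L}^{1/\beta}$ for all $0<\alpha<\beta\le1$. (ii) If $X\in\mathcal{SC}_\alpha$ for some $0<\alpha<1$ and $\lim_{x\to\infty}Q_X(x)/x^\alpha=0$, then $X^\alpha\in\mathcal{L}$.
   Context: For a nonnegative r.v. $X$, $Q_X(x)=-\log\mathbb{P}(X>x)$. $X\in\mathcal{SC}_\alpha$ ($0<\alpha<1$) if (i) $Q_X$ is eventually concave, (ii) $Q_X(x)/\log x\to\infty$, and (iii) there is $x_0>0$ such that $Q_X(x)/x^\alpha$ is nonincreasing on $[x_0,\infty)$. Class $\mathcal{L}$: nonnegative $Z$ with $\mathbb{P}(Z>x)>0$ for all $x$ and $\mathbb{P}(Z>x+y)/\mathbb{P}(Z>x)\to1$ for some (all) $y>0$; $X\in\mathcal{L}^p$ ($p\ge1$) means $X^{1/p}\in\mathcal{L}$. *)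

theory Defs
  imports "HOL-Probability.Probability"
begin

definition tail :: "'a measure \<Rightarrow> ('a \<Rightarrow> real) \<Rightarrow> real \<Rightarrow> real" where
  "tail M X x = measure M {\<omega> \<in> space M. X \<omega> > x}"

definition Qf :: "'a measure \<Rightarrow> ('a \<Rightarrow> real) \<Rightarrow> real \<Rightarrow> real" where
  "Qf M X x = - ln (tail M X x)"

text \<open>The class SC_alpha. Condition (i) "Q_X eventually concave" is read as: there is a
  point a from which on Q_X is finite (the tail is positive) and concave.\<close>
definition SC :: "real \<Rightarrow> 'a measure \<Rightarrow> ('a \<Rightarrow> real) \<Rightarrow> bool" where
  "SC \<alpha> M X \<longleftrightarrow>
     (\<exists>a. (\<forall>x\<ge>a. tail M X x > 0) \<and> concave_on {a..} (Qf M X)) \<and>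
     filterlim (\<lambda>x. Qf M X x / ln x) at_top at_top \<and>
     (\<exists>x0>0. antimono_on {x0..} (\<lambda>x. Qf M X x / x powr \<alpha>))"

definition in_L :: "'a measure \<Rightarrow> ('a \<Rightarrow> real) \<Rightarrow> bool" where
  "in_L M Z \<longleftrightarrow> (\<forall>x. tail M Z x > 0) \<and>
     (\<forall>y>0. ((\<lambda>x. tail M Z (x + y) / tail M Z x) \<longlongrightarrow> 1) at_top)"

definition in_Lp :: "real \<Rightarrow> 'a measure \<Rightarrow> ('a \<Rightarrow> real) \<Rightarrow> bool" where
  "in_Lp p M X \<longleftrightarrow> in_L M (\<lambda>\<omega>. X \<omega> powr (1 / p))"

end

theory Submission imports Defs "HOL-Real_Asymp.Real_Asymp" begin

lemma powr_gt_iff: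
  assumes "0 \<le> t" "0 \<le> x" "0 < (g::real)"
  shows "(t powr g > x) = (t > x powr (1/g))"
proof (cases "t = 0")
  case True thus ?thesis using assms by simp
next
  case False
  hence t: "t > 0" using assms by simp
  show ?thesis
  proof
    assume "t powr g > x"
    hence "x powr (1/g) < (t powr g) powr (1/g)" using powr_less_mono2[of "1/g" x "t powr g"] assms by simp
    also have "\<dots> = t" using t assms by (simp add: powr_powr)
    finally show "t > x powr (1/g)" .
  next
    assume "t > x powr (1/g)"
    hence "(x powr (1/g)) powr g < t powr g" using powr_less_mono2[of g "x powr (1/g)" t] assms by simp
    moreover have "(x powr (1/g)) powr g = x" using assms
      by (cases "x = 0") (auto simp: powr_powr)
    ultimately show "t powr g > x" by simp
  qed
qed

lemma concave_slope:
  fixes Q :: "real \<Rightarrow> real"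
  assumes "concave_on {a..} Q" "a < u" "u < v"
  shows "(Q v - Q u) / (v - u) \<le> (Q u - Q a) / (u - a)"
proof -
  have c: "convex_on {a..} (\<lambda>x. - Q x)" using assms(1) by (simp add: concave_on_def)
  have 1: "((- Q a) - (- Q u)) / (a - u) \<le> ((- Q a) - (- Q v)) / (a - v)"
    and 2: "((- Q a) - (- Q v)) / (a - v) \<le> ((- Q u) - (- Q v)) / (u - v)"
    using convex_on_slope_le[OF c, of a v u] assms by auto
  have "((- Q a) - (- Q u)) / (a - u) = - ((Q u - Q a) / (u - a))"
    using assms by (simp add: field_simps)
  moreover have "((- Q u) - (- Q v)) / (u - v) = - ((Q v - Q u) / (v - u))"
    using assms by (simp add: field_simps)
  ultimately show ?thesis using 1 2 by linarith
qed

lemma powr_diff_bound: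
  fixes p x y :: real
  assumes p: "p \<ge> 1" and x: "x > 0" and y: "y > 0" "y \<le> x"
  shows "(x + y) powr p - x powr p \<le> p * y * 2 powr (p - 1) * x powr (p - 1)"
proof -
  have "\<exists>z. x < z \<and> z < x + y \<and> (x + y) powr p - x powr p = ((x + y) - x) * (p * z powr (p - 1))"
    apply (rule MVT2)
    using y x by (auto intro!: has_real_derivative_powr)
  then obtain z where z: "x < z" "z < x + y" "(x + y) powr p - x powr p = y * (p * z powr (p - 1))"
    by auto
  have "z powr (p - 1) \<le> (2 * x) powr (p - 1)"
    using z x y p by (intro powr_mono2) auto
  also have "\<dots> = 2 powr (p - 1) * x powr (p - 1)" using x by (simp add: powr_mult)
  finally have "y * (p * z powr (p - 1)) \<le> y * (p * (2 powr (p - 1) * x powr (p - 1)))"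
    using y p by (intro mult_left_mono) auto
  thus ?thesis using z by (simp add: algebra_simps)
qed

lemma key:
  fixes Q :: "real \<Rightarrow> real" and g y a :: real
  assumes conc: "concave_on {a..} Q" and mono: "mono Q" and Qnn: "\<And>x. Q x \<ge> 0"
    and g: "0 < g" "g \<le> 1" and y: "y > 0"
    and lim: "((\<lambda>u. Q u / u powr g) \<longlongrightarrow> 0) at_top"
  shows "((\<lambda>x. Q ((x + y) powr (1/g)) - Q (x powr (1/g))) \<longlongrightarrow> 0) at_top"
proof -
  define p where "p = 1 / g"
  have p: "p \<ge> 1" "p > 0" using g by (auto simp: p_def field_simps)
  have pg: "p * g = 1" using g by (simp add: p_def)
  define K where "K = p * y * 2 powr (p - 1)"
  have K: "K \<ge> 0" using p y by (simp add: K_def)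
  define G where "G = (\<lambda>u. 2 * K * ((Q u / u powr g) + \<bar>Q a\<bar> * u powr (- g)))"
  have powtop: "filterlim (\<lambda>x::real. x powr p) at_top at_top"
    using p(2) by (rule real_powr_at_top)
  have G0: "(G \<longlongrightarrow> 0) at_top"
  proof -
    have "((\<lambda>u::real. u powr (- g)) \<longlongrightarrow> 0) at_top"
      using g by (intro tendsto_neg_powr filterlim_ident) auto
    hence "(G \<longlongrightarrow> 2 * K * (0 + \<bar>Q a\<bar> * 0)) at_top"
      unfolding G_def by (intro tendsto_intros lim)
    thus ?thesis by simp
  qed
  have GC: "((\<lambda>x. G (x powr p)) \<longlongrightarrow> 0) at_top"
    using filterlim_compose[OF G0 powtop] .
  have ev1: "eventually (\<lambda>x::real. x powr p \<ge> 2 * \<bar>a\<bar> + 1) at_top"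
    using powtop by (simp add: filterlim_at_top)
  have ev2: "eventually (\<lambda>x::real. x \<ge> y) at_top" by (rule eventually_ge_at_top)
  have bound: "eventually (\<lambda>x. 0 \<le> Q ((x + y) powr (1/g)) - Q (x powr (1/g))
      \<and> Q ((x + y) powr (1/g)) - Q (x powr (1/g)) \<le> G (x powr p)) at_top"
    using ev1 ev2
  proof eventually_elim
    case (elim x)
    have x: "x > 0" using elim y by auto
    define u where "u = x powr p"
    define v where "v = (x + y) powr p"
    have u: "u \<ge> 2 * \<bar>a\<bar> + 1" "u > 0" using elim by (auto simp: u_def)
    have uv: "u < v" unfolding u_def v_def using x y p by (intro powr_less_mono2) auto
    have au: "a < u" using u by linarith
    have mon: "Q u \<le> Q v" using mono uv by (simp add: mono_def)
    have d: "v - u \<le> K * x powr (p - 1)"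
      using powr_diff_bound[OF p(1) x y(1) elim(2)] by (simp add: u_def v_def K_def)
    have xp: "x powr (p - 1) = u powr (1 - g)"
      using x pg by (simp add: u_def powr_powr algebra_simps)
    have sl: "(Q v - Q u) / (v - u) \<le> (Q u - Q a) / (u - a)"
      by (rule concave_slope[OF conc au uv])
    have "Q v - Q u = (v - u) * ((Q v - Q u) / (v - u))" using uv by simp
    also have "\<dots> \<le> (v - u) * ((Q u - Q a) / (u - a))"
      using sl uv by (intro mult_left_mono) auto
    also have "\<dots> \<le> (K * u powr (1 - g)) * ((Q u - Q a) / (u - a))"
    proof (rule mult_right_mono)
      show "v - u \<le> K * u powr (1 - g)" using d xp by simp
      show "0 \<le> (Q u - Q a) / (u - a)" using mono au Qnn by (auto simp: mono_def)
    qed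
    also have "\<dots> \<le> (K * u powr (1 - g)) * ((Q u + \<bar>Q a\<bar>) / (u / 2))"
    proof (rule mult_left_mono)
      have "u / 2 \<le> u - a" using u by linarith
      moreover have "Q u - Q a \<le> Q u + \<bar>Q a\<bar>" by linarith
      moreover have "0 \<le> Q u - Q a" using mono au by (auto simp: mono_def)
      ultimately show "(Q u - Q a) / (u - a) \<le> (Q u + \<bar>Q a\<bar>) / (u / 2)"
        using u by (intro frac_le) auto
      show "0 \<le> K * u powr (1 - g)" using K by simp
    qed
    also have "\<dots> = G u"
    proof -
      have "u = u powr (1 - g) * u powr g" using u by (simp add: powr_add[symmetric])
      hence "(K * u powr (1 - g)) * ((Q u + \<bar>Q a\<bar>) / (u / 2))
           = 2 * K * ((Q u + \<bar>Q a\<bar>) / u powr g)"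
        using u by (simp add: field_simps)
      also have "\<dots> = G u" using u
        by (simp add: G_def powr_minus field_simps)
      finally show ?thesis .
    qed
    finally show ?case using mon by (simp add: u_def v_def p_def)
  qed
  show ?thesis
    by (rule tendsto_sandwich[OF eventually_mono[OF bound] eventually_mono[OF bound] tendsto_const GC]) auto
qed


theorem lemmaA6:
  fixes M :: "'a measure" and X :: "'a \<Rightarrow> real"
  assumes "prob_space M"
    and "X \<in> borel_measurable M"
    and "\<forall>\<omega>\<in>space M. 0 \<le> X \<omega>"
  shows "(\<forall>\<alpha> \<beta>. 0 < \<alpha> \<and> \<alpha> < \<beta> \<and> \<beta> \<le> 1 \<and> SC \<alpha> M X \<longrightarrow> in_Lp (1 / \<beta>) M X)
       \<and> (\<forall>\<alpha>. 0 < \<alpha> \<and> \<alpha> < 1 \<and> SC \<alpha> M X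
              \<and> ((\<lambda>x. Qf M X x / x powr \<alpha>) \<longlongrightarrow> 0) at_top
              \<longrightarrow> in_L M (\<lambda>\<omega>. X \<omega> powr \<alpha>))"
proof -
  interpret prob_space M by (rule assms(1))
  define T where "T = tail M X"
  define Q where "Q = Qf M X"
  have meas: "\<And>x. {\<omega>\<in>space M. X \<omega> > x} \<in> sets M" using assms(2) by measurable
  have Tanti: "T x' \<le> T x" if "x \<le> x'" for x x'
    unfolding T_def tail_def using that meas by (intro finite_measure_mono) auto
  have Tle1: "T x \<le> 1" for x unfolding T_def tail_def by (rule prob_le_1)
  have QT: "Q = (\<lambda>x. - ln (T x))" unfolding Q_def T_def by (simp add: Qf_def fun_eq_iff)
  have SCfacts: "(\<forall>x. T x > 0) \<and> mono Q \<and> (\<forall>x. Q x \<ge> 0) \<and> (\<forall>x. T x = exp (- Q x))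
      \<and> (\<exists>a. concave_on {a..} Q)" if "SC \<alpha> M X" for \<alpha>
  proof -
    from that obtain a where a: "\<forall>x\<ge>a. T x > 0" "concave_on {a..} Q"
      unfolding SC_def T_def Q_def by blast
    have Tpos: "T x > 0" for x
    proof (cases "x \<ge> a")
      case True thus ?thesis using a by auto
    next
      case False thus ?thesis using a(1) Tanti[of x a] by auto
    qed
    have "mono Q" unfolding QT mono_def using Tpos Tanti by auto
    moreover have "Q x \<ge> 0" for x unfolding QT using Tpos Tle1 by simp
    moreover have "T x = exp (- Q x)" for x unfolding QT using Tpos by simp
    ultimately show ?thesis using Tpos a by blast
  qed
  have inL: "in_L M (\<lambda>\<omega>. X \<omega> powr g)"
    if sc: "SC \<alpha> M X" and g: "0 < g" "g \<le> 1" and lim: "((\<lambda>u. Q u / u powr g) \<longlongrightarrow> 0) at_top"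
    for \<alpha> g
  proof -
    note F = SCfacts[OF sc]
    obtain a where conc: "concave_on {a..} Q" using F by blast
    have tl: "tail M (\<lambda>\<omega>. X \<omega> powr g) x = T (x powr (1/g))" if "x \<ge> 0" for x
    proof -
      have "{\<omega>\<in>space M. X \<omega> powr g > x} = {\<omega>\<in>space M. X \<omega> > x powr (1/g)}"
        using powr_gt_iff[of _ x g] assms(3) that g by auto
      thus ?thesis unfolding tail_def T_def by simp
    qed
    have tln: "tail M (\<lambda>\<omega>. X \<omega> powr g) x = 1" if "x < 0" for x
    proof -
      have "{\<omega>\<in>space M. X \<omega> powr g > x} = space M"
        using that by (auto intro: less_le_trans[OF _ powr_ge_zero])
      thus ?thesis unfolding tail_def by (simp add: prob_space)
    qed
    have pos: "\<forall>x. tail M (\<lambda>\<omega>. X \<omega> powr g) x > 0"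
    proof
      fix x show "tail M (\<lambda>\<omega>. X \<omega> powr g) x > 0"
        using tl tln F by (cases "x \<ge> 0") auto
    qed
    have "((\<lambda>x. tail M (\<lambda>\<omega>. X \<omega> powr g) (x + y) / tail M (\<lambda>\<omega>. X \<omega> powr g) x) \<longlongrightarrow> 1) at_top"
      if y: "y > 0" for y
    proof -
      have d: "((\<lambda>x. Q ((x + y) powr (1/g)) - Q (x powr (1/g))) \<longlongrightarrow> 0) at_top"
        using key[OF conc _ _ g y lim] F by blast
      have "((\<lambda>x. exp (- (Q ((x + y) powr (1/g)) - Q (x powr (1/g))))) \<longlongrightarrow> exp (- 0)) at_top"
        by (intro tendsto_intros d)
      hence e: "((\<lambda>x. exp (- (Q ((x + y) powr (1/g)) - Q (x powr (1/g))))) \<longlongrightarrow> 1) at_top"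
        by simp
      have "eventually (\<lambda>x. tail M (\<lambda>\<omega>. X \<omega> powr g) (x + y) / tail M (\<lambda>\<omega>. X \<omega> powr g) x
          = exp (- (Q ((x + y) powr (1/g)) - Q (x powr (1/g))))) at_top"
        using eventually_ge_at_top[of "0::real"]
      proof eventually_elim
        case (elim x)
        hence "tail M (\<lambda>\<omega>. X \<omega> powr g) (x + y) / tail M (\<lambda>\<omega>. X \<omega> powr g) x
          = exp (- Q ((x + y) powr (1/g))) / exp (- Q (x powr (1/g)))"
          using tl[of x] tl[of "x + y"] y F by simp
        also have "\<dots> = exp (- (Q ((x + y) powr (1/g)) - Q (x powr (1/g))))"
          by (simp add: exp_diff[symmetric])
        finally show ?case .
      qed
      thus ?thesis using e by (simp add: tendsto_cong)
    qed
    thus ?thesis unfolding in_L_def using pos by blast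
  qed
  show ?thesis
  proof (intro conjI allI impI)
    fix \<alpha> \<beta> :: real
    assume h: "0 < \<alpha> \<and> \<alpha> < \<beta> \<and> \<beta> \<le> 1 \<and> SC \<alpha> M X"
    then obtain x0 where x0: "x0 > 0" "antimono_on {x0..} (\<lambda>x. Q x / x powr \<alpha>)"
      unfolding SC_def Q_def by blast
    have Qnn: "Q x \<ge> 0" for x using SCfacts h by blast
    define C where "C = Q x0 / x0 powr \<alpha>"
    have lim0: "((\<lambda>u. C * u powr (\<alpha> - \<beta>)) \<longlongrightarrow> C * 0) at_top"
      using h by (intro tendsto_intros tendsto_neg_powr filterlim_ident) auto
    have "eventually (\<lambda>u. 0 \<le> Q u / u powr \<beta> \<and> Q u / u powr \<beta> \<le> C * u powr (\<alpha> - \<beta>)) at_top"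
      using eventually_ge_at_top[of x0]
    proof eventually_elim
      case (elim u)
      have u: "u > 0" using elim x0 by simp
      have "Q u / u powr \<alpha> \<le> C" unfolding C_def
        using x0(2) elim by (auto simp: monotone_on_def)
      hence "(Q u / u powr \<alpha>) * u powr (\<alpha> - \<beta>) \<le> C * u powr (\<alpha> - \<beta>)"
        by (intro mult_right_mono) auto
      moreover have "(Q u / u powr \<alpha>) * u powr (\<alpha> - \<beta>) = Q u / u powr \<beta>"
        using u by (simp add: powr_diff)
      ultimately show ?case using Qnn u by simp
    qed
    hence ev: "eventually (\<lambda>u. 0 \<le> Q u / u powr \<beta> \<and> Q u / u powr \<beta> \<le> C * u powr (\<alpha> - \<beta>)) at_top" .
    have lim0': "((\<lambda>u. C * u powr (\<alpha> - \<beta>)) \<longlongrightarrow> 0) at_top" using lim0 by simp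
    have limb: "((\<lambda>u. Q u / u powr \<beta>) \<longlongrightarrow> 0) at_top"
      by (rule tendsto_sandwich[OF eventually_mono[OF ev] eventually_mono[OF ev] tendsto_const lim0']) auto
    have sc: "SC \<alpha> M X" and b: "0 < \<beta>" "\<beta> \<le> 1" using h by auto
    have "in_L M (\<lambda>\<omega>. X \<omega> powr \<beta>)" by (rule inL[OF sc b limb])
    thus "in_Lp (1 / \<beta>) M X" unfolding in_Lp_def by simp
  next
    fix \<alpha> :: real
    assume h: "0 < \<alpha> \<and> \<alpha> < 1 \<and> SC \<alpha> M X \<and> ((\<lambda>x. Qf M X x / x powr \<alpha>) \<longlongrightarrow> 0) at_top"
    have sc: "SC \<alpha> M X" and b: "0 < \<alpha>" "\<alpha> \<le> 1" using h by auto
    have lima: "((\<lambda>u. Q u / u powr \<alpha>) \<longlongrightarrow> 0) at_top" using h by (simp add: Q_def)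
    show "in_L M (\<lambda>\<omega>. X \<omega> powr \<alpha>)" by (rule inL[OF sc b lima])
  qed
qed

end
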